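(* Let $m\ge1$ and $0\le r<q-1$. Then there exists a codeword $\mathbf{c}\in RM_q(r,m)$ such that $w_1(\mathbf{c})=d_1(RM_q(r,m))$ and $\chi_1(\mathbf{c})$ is a successive subset of $\mathbb{Z}_{q^m}$ with $1\notin\chi_1(\mathbf{c})$ unless $\chi_1(\mathbf{c})=\mathbb{Z}_{q^m}$.
   Context: Fix an enumeration $\mathbb{F}_q=\{\alpha_1=0,\alpha_2,\dots,\alpha_q\}$ and order $\mathbb{F}_q$ by $\alpha_1<\dots<\alpha_q$; order $\mathbb{F}_q^m$ lexicographically as $P_1<\dots<P_{q^m}$. $RM_q(r,m)=\{(f(P_1),\dots,f(P_{q^m})) : f\in\mathbb{F}_q[X_1,\dots,X_m],\ \deg f\le r\}$. $\mathbb{Z}_L=\{1,\dots,L\}$ with indices cyclic mod $L$. $\chi_1(\mathbf{c})$ is the Hamming support of $\mathbf{c}$ and $w_1$ the Hamming weight. For $J\subseteq\mathbb{Z}_L$, a hole of $J$ of size $h\ge1$ is a set $\{a+1,\dots,a+h\}\subseteq\mathbb{Z}_L\setminus J$ (indices mod $L$) with $a,a+h+1\in J$; $J$ is a successive subset if it has at most one hole. *)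

theory Defs
  imports Main "HOL-Library.Cardinality"
begin

text \<open>Positions are 1-indexed: Z_L = {1..L}. Cyclic reduction of an index into {1..L}.\<close>
definition cyc :: "nat \<Rightarrow> nat \<Rightarrow> nat" where
  "cyc L i = ((i + L - 1) mod L) + 1"

definition is_hole :: "nat \<Rightarrow> nat set \<Rightarrow> nat set \<Rightarrow> bool" where
  "is_hole L J H \<longleftrightarrow> (\<exists>a h. a \<in> {1..L} \<and> h \<ge> 1 \<and> a \<in> J \<and> cyc L (a + h + 1) \<in> J \<and>
      H = (\<lambda>i. cyc L (a + i)) ` {1..h} \<and> H \<subseteq> {1..L} - J)"

definition successive :: "nat \<Rightarrow> nat set \<Rightarrow> bool" where
  "successive L J \<longleftrightarrow> J \<subseteq> {1..L} \<and> card {H. is_hole L J H} \<le> 1"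

definition supp1 :: "nat \<Rightarrow> (nat \<Rightarrow> 'a::zero) \<Rightarrow> nat set" where
  "supp1 L c = {j \<in> {1..L}. c j \<noteq> 0}"

definition w1 :: "nat \<Rightarrow> (nat \<Rightarrow> 'a::zero) \<Rightarrow> nat" where
  "w1 L c = card (supp1 L c)"

definition d1 :: "nat \<Rightarrow> (nat \<Rightarrow> 'a::zero) set \<Rightarrow> nat" where
  "d1 L C = Min {w1 L c | c. c \<in> C \<and> supp1 L c \<noteq> {}}"

text \<open>The j-th point P_j of F_q^m in lexicographic order w.r.t. the enumeration alpha_1<...<alpha_q
  (alpha indexed by {1..q}); coordinates indexed by {1..m}, X_1 most significant.\<close>
definition lexpt :: "(nat \<Rightarrow> 'a::zero) \<Rightarrow> nat \<Rightarrow> nat \<Rightarrow> nat \<Rightarrow> nat \<Rightarrow> 'a" where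
  "lexpt alpha q m j = (\<lambda>k. if k \<in> {1..m} then alpha ((j - 1) div q ^ (m - k) mod q + 1) else 0)"

definition mexps :: "nat \<Rightarrow> nat \<Rightarrow> (nat \<Rightarrow> nat) set" where
  "mexps m r = {e. (\<forall>k. k \<notin> {1..m} \<longrightarrow> e k = 0) \<and> (\<Sum>k\<in>{1..m}. e k) \<le> r}"

definition peval :: "nat \<Rightarrow> nat \<Rightarrow> ((nat \<Rightarrow> nat) \<Rightarrow> 'a::comm_ring_1) \<Rightarrow> (nat \<Rightarrow> 'a) \<Rightarrow> 'a" where
  "peval m r cf x = (\<Sum>e\<in>mexps m r. cf e * (\<Prod>k\<in>{1..m}. x k ^ e k))"

definition RM :: "(nat \<Rightarrow> 'a::{finite,field}) \<Rightarrow> nat \<Rightarrow> nat \<Rightarrow> (nat \<Rightarrow> 'a) set" where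
  "RM alpha r m = {(\<lambda>j. if j \<in> {1..card (UNIV::'a set) ^ m}
        then peval m r cf (lexpt alpha (card (UNIV::'a set)) m j) else 0) | cf. True}"

end

theory Submission
  imports Defs "HOL-Computational_Algebra.Polynomial"
begin


definition Pts :: "nat \<Rightarrow> (nat \<Rightarrow> 'a::zero) set" where
  "Pts m = {x. \<forall>k. k \<notin> {1..m} \<longrightarrow> x k = 0}"

fun D :: "nat \<Rightarrow> nat \<Rightarrow> ((nat \<Rightarrow> 'a::comm_ring_1) \<Rightarrow> 'a) \<Rightarrow> bool" where
  "D 0 r F = (\<exists>c. \<forall>x. F x = c)"
| "D (Suc m) r F = (\<exists>g. (\<forall>i\<le>r. D m (r-i) (g i)) \<and> (\<forall>x. F x = (\<Sum>i\<le>r. x (Suc m) ^ i * g i x)))"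

lemma D_dep: "D m r F \<Longrightarrow> (\<forall>k\<in>{1..m}. x k = y k) \<Longrightarrow> F x = F y"
proof (induction m arbitrary: r F)
  case 0 then show ?case by auto
next
  case (Suc m)
  then obtain g where g: "\<forall>i\<le>r. D m (r-i) (g i)" "\<forall>x. F x = (\<Sum>i\<le>r. x (Suc m) ^ i * g i x)" by auto
  have "g i x = g i y" if "i \<le> r" for i using Suc.IH[of "r-i" "g i"] g(1) that Suc.prems(2) by auto
  moreover have "x (Suc m) = y (Suc m)" using Suc.prems(2) by auto
  ultimately show ?case using g(2) by simp
qed

lemma D_zero: "D m r (\<lambda>_. 0)"
proof (induction m arbitrary: r)
  case 0 then show ?case by auto
next
  case (Suc m) show ?case by (auto intro!: exI[of _ "\<lambda>i _. 0"] Suc.IH)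
qed

lemma D_add: "D m r F \<Longrightarrow> D m r G \<Longrightarrow> D m r (\<lambda>x. F x + G x)"
proof (induction m arbitrary: r F G)
  case 0 then show ?case by auto
next
  case (Suc m)
  obtain g where g: "\<forall>i\<le>r. D m (r-i) (g i)" "\<forall>x. F x = (\<Sum>i\<le>r. x (Suc m) ^ i * g i x)" using Suc.prems by auto
  obtain h where h: "\<forall>i\<le>r. D m (r-i) (h i)" "\<forall>x. G x = (\<Sum>i\<le>r. x (Suc m) ^ i * h i x)" using Suc.prems by auto
  show ?case
    apply (simp only: D.simps)
    apply (rule exI[of _ "\<lambda>i x. g i x + h i x"])
    using g h Suc.IH by (auto simp: distrib_left sum.distrib)
qed

lemma D_smult: "D m r F \<Longrightarrow> D m r (\<lambda>x. c * F x)"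
proof (induction m arbitrary: r F)
  case 0 then show ?case by auto
next
  case (Suc m)
  obtain g where g: "\<forall>i\<le>r. D m (r-i) (g i)" "\<forall>x. F x = (\<Sum>i\<le>r. x (Suc m) ^ i * g i x)" using Suc.prems by auto
  show ?case
    apply (simp only: D.simps)
    apply (rule exI[of _ "\<lambda>i x. c * g i x"])
    using g Suc.IH by (auto simp: sum_distrib_left mult.left_commute)
qed

lemma D_sum: "(\<And>e. e \<in> S \<Longrightarrow> D m r (f e)) \<Longrightarrow> D m r (\<lambda>x. \<Sum>e\<in>S. f e x)"
proof (cases "finite S")
  case True
  assume "\<And>e. e \<in> S \<Longrightarrow> D m r (f e)"
  with True show ?thesis
  proof (induction S rule: finite_induct)
    case empty then show ?case using D_zero by simp
  next
    case (insert a S) then show ?case using D_add[of m r "f a"] by simp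
  qed
next
  case False then show ?thesis using D_zero by simp
qed

lemma D_mono: "(\<Sum>k\<in>{1..m}. e k) \<le> r \<Longrightarrow> D m r (\<lambda>x::nat\<Rightarrow>'a::comm_ring_1. \<Prod>k\<in>{1..m}. x k ^ e k)"
proof (induction m arbitrary: r)
  case 0 then show ?case by auto
next
  case (Suc m)
  define t where "t = e (Suc m)"
  have sp: "(\<Sum>k\<in>{1..Suc m}. e k) = (\<Sum>k\<in>{1..m}. e k) + t" by (simp add: t_def)
  have IH: "D m (r - t) (\<lambda>x::nat\<Rightarrow>'a. \<Prod>k\<in>{1..m}. x k ^ e k)" proof -
    have "sum e {1..m} \<le> r - t" using Suc.prems sp by linarith
    then show ?thesis by (rule Suc.IH)
  qed
  have tr: "t \<le> r" using Suc.prems sp by auto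
  show ?case
    apply (simp only: D.simps)
    apply (rule exI[of _ "\<lambda>i x. if i = t then (\<Prod>k\<in>{1..m}. x k ^ e k) else 0"])
    apply (intro conjI allI impI)
    subgoal for i by (cases "i = t") (use IH D_zero in auto)
    subgoal for x using tr by (simp add: t_def if_distrib cong: if_cong)
    done
qed

lemma D_peval: "D m r (peval m r cf)"
proof -
  have "D m r (\<lambda>x. \<Sum>e\<in>mexps m r. cf e * (\<Prod>k\<in>{1..m}. x k ^ e k))"
    by (rule D_sum, rule D_smult, rule D_mono) (auto simp: mexps_def)
  then show ?thesis unfolding peval_def[abs_def] .
qed

lemma Pts_Suc: "Pts (Suc m) = (\<lambda>(y,a). y(Suc m := a)) ` (Pts m \<times> UNIV)"
proof
  show "Pts (Suc m) \<subseteq> (\<lambda>(y,a). y(Suc m := a)) ` (Pts m \<times> UNIV)"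
  proof
    fix x assume x: "x \<in> Pts (Suc m)"
    have "x = (\<lambda>(y,a). y(Suc m := a)) (x(Suc m := 0), x (Suc m))" by auto
    moreover have "x(Suc m := 0) \<in> Pts m" using x by (auto simp: Pts_def)
    ultimately show "x \<in> (\<lambda>(y,a). y(Suc m := a)) ` (Pts m \<times> UNIV)" by blast
  qed
qed (auto simp: Pts_def)

lemma finite_Pts: "finite (Pts m :: (nat \<Rightarrow> 'a::{finite,zero}) set)"
proof (induction m)
  case 0
  have "Pts 0 = {(\<lambda>_. 0) :: nat \<Rightarrow> 'a}" by (auto simp: Pts_def)
  then show ?case by simp
next
  case (Suc m) then show ?case by (simp add: Pts_Suc)
qed

lemma arith_key:
  fixes q r t :: nat assumes "t \<le> r" "r < q"
  shows "(q - r) * q \<le> (q - (r - t)) * (q - t)"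
proof -
  define u where "u = r - t"
  define v where "v = q - r - 1"
  have r: "r = t + u" and q: "q = t + u + v + 1" using assms unfolding u_def v_def by arith+
  have e: "(t+v+1)*(u+v+1) = (v+1)*(t+u+v+1) + t*u" by (simp add: algebra_simps)
  have "(q - r) * q = (v+1)*(t+u+v+1)" using r q by simp
  also have "\<dots> \<le> (t+v+1)*(u+v+1)" using e by simp
  also have "\<dots> = (q - (r - t)) * (q - t)" using r q by simp
  finally show ?thesis .
qed



lemma count_bound:
  fixes F :: "(nat \<Rightarrow> 'a::{finite,field}) \<Rightarrow> 'a"
  assumes "D m r F" "r < CARD('a)" "\<exists>x\<in>Pts m. F x \<noteq> 0"
  shows "(CARD('a) - r) * CARD('a) ^ m \<le> CARD('a) * card {x\<in>Pts m. F x \<noteq> 0}"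
  using assms
proof (induction m arbitrary: r F)
  case 0
  obtain x where x: "x \<in> Pts 0" "F x \<noteq> 0" using 0(3) by blast
  have fin: "finite {x\<in>Pts 0. F x \<noteq> 0}" using finite_Pts[where 'a='a, of 0] by simp
  have "card {x\<in>Pts 0. F x \<noteq> 0} > 0" using x fin card_gt_0_iff by blast
  then have "1 \<le> card {x\<in>Pts 0. F x \<noteq> 0}" by linarith
  then have "CARD('a) * 1 \<le> CARD('a) * card {x\<in>Pts 0. F x \<noteq> 0}"
    by (intro mult_le_mono2) (simp add: Suc_le_eq)
  then have h: "CARD('a) \<le> CARD('a) * card {x\<in>Pts 0. F x \<noteq> 0}" by (simp only: mult_1_right)
  have "(CARD('a) - r) * CARD('a) ^ 0 \<le> CARD('a)" by simp
  then show ?case using h by linarith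
next
  case (Suc m)
  define q where "q = CARD('a)"
  obtain g where g: "\<forall>i\<le>r. D m (r-i) (g i)" "\<forall>x. F x = (\<Sum>i\<le>r. x (Suc m) ^ i * g i x)"
    using Suc.prems by auto
  have gdep: "g i (y(Suc m := a)) = g i y" if "i \<le> r" for i y a
    using D_dep[of m "r-i" "g i"] g(1) that by auto
  define Z where "Z = {i. i \<le> r \<and> (\<exists>y\<in>Pts m. g i y \<noteq> 0)}"
  have Zne: "Z \<noteq> {}"
  proof
    assume Z: "Z = {}"
    obtain x where x: "x \<in> Pts (Suc m)" "F x \<noteq> 0" using Suc.prems by auto
    then have "(\<Sum>i\<le>r. x (Suc m) ^ i * g i x) \<noteq> 0" using g(2) by simp
    then obtain i where i: "i \<le> r" "g i x \<noteq> 0"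
      by (rule sum.not_neutral_contains_not_neutral) auto
    have "x(Suc m := 0) \<in> Pts m" using x by (auto simp: Pts_def)
    moreover have "g i (x(Suc m := 0)) = g i x" using gdep[OF i(1), of x 0] by simp
    ultimately show False using Z i unfolding Z_def by auto
  qed
  have finZ: "finite Z" unfolding Z_def by auto
  define t where "t = Max Z"
  have tZ: "t \<in> Z" using Zne finZ t_def by auto
  have tr: "t \<le> r" using tZ Z_def by auto
  have above: "g i y = 0" if "t < i" "i \<le> r" "y \<in> Pts m" for i y
  proof (rule ccontr)
    assume "g i y \<noteq> 0"
    then have "i \<in> Z" using that Z_def by auto
    then show False using that finZ t_def by (meson Max_ge leD)
  qed
  define Y where "Y = {y\<in>Pts m. g t y \<noteq> 0}"
  have IH: "(q - (r - t)) * q ^ m \<le> q * card Y"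
    unfolding Y_def q_def
    by (rule Suc.IH) (use g(1) tr Suc.prems(2) tZ Z_def in auto)
  define p where "p y = (\<Sum>i\<le>t. monom (g i y) i)" for y
  define A where "A y = {a. poly (p y) a \<noteq> 0}" for y
  have Abound: "q - t \<le> card (A y)" if "y \<in> Y" for y
  proof -
    have "coeff (p y) t = g t y" unfolding p_def by (simp add: coeff_sum coeff_monom)
    then have "p y \<noteq> 0" using that Y_def by auto
    then have "card {a. poly (p y) a = 0} \<le> degree (p y)" by (rule card_poly_roots_bound)
    also have "degree (p y) \<le> t" unfolding p_def
      by (rule degree_sum_le) (auto simp: degree_monom_le intro: order_trans[OF degree_monom_le])
    finally have rb: "card {a. poly (p y) a = 0} \<le> t" .
    have "A y = UNIV - {a. poly (p y) a = 0}" unfolding A_def by auto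
    then have "card (A y) = q - card {a. poly (p y) a = 0}"
      unfolding q_def by (simp add: card_Diff_subset)
    then show ?thesis using rb by linarith
  qed
  have Fval: "F (y(Suc m := a)) = poly (p y) a" if "y \<in> Pts m" for y a
  proof -
    have "F (y(Suc m := a)) = (\<Sum>i\<le>r. a ^ i * g i y)" using g(2) gdep by simp
    also have "\<dots> = (\<Sum>i\<le>t. a ^ i * g i y)"
      by (rule sum.mono_neutral_right) (use tr above that in auto)
    also have "\<dots> = poly (p y) a" unfolding p_def by (simp add: poly_sum poly_monom mult.commute)
    finally show ?thesis .
  qed
  define S where "S = Sigma Y A"
  have finY: "finite Y" unfolding Y_def using finite_Pts[where 'a='a, of m] by auto
  have inj: "inj_on (\<lambda>(y,a). y(Suc m := a)) S"
  proof (rule inj_onI, clarify)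
    fix y a y' b assume "(y,a) \<in> S" "(y',b) \<in> S" and eq: "y(Suc m := a) = y'(Suc m := b)"
    then have "y \<in> Pts m" "y' \<in> Pts m" unfolding S_def Y_def by auto
    then have "y (Suc m) = 0" "y' (Suc m) = 0" unfolding Pts_def by auto
    moreover have "a = b" using fun_cong[OF eq, of "Suc m"] by simp
    ultimately show "y = y' \<and> a = b" using eq by (metis fun_upd_triv fun_upd_upd)
  qed
  have sub: "(\<lambda>(y,a). y(Suc m := a)) ` S \<subseteq> {x\<in>Pts (Suc m). F x \<noteq> 0}"
    using Fval unfolding S_def A_def Y_def Pts_Suc by auto
  have "card S = (\<Sum>y\<in>Y. card (A y))" unfolding S_def
    by (rule card_SigmaI) (use finY in \<open>auto simp: A_def\<close>)
  also have "\<dots> \<ge> card Y * (q - t)" using Abound sum_mono[of Y "\<lambda>_. q - t" "\<lambda>y. card (A y)"] by simp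
  finally have cS: "card Y * (q - t) \<le> card S" .
  have "card S = card ((\<lambda>(y,a). y(Suc m := a)) ` S)" using card_image[OF inj] by simp
  also have "\<dots> \<le> card {x\<in>Pts (Suc m). F x \<noteq> 0}"
    by (rule card_mono[OF _ sub]) (use finite_Pts[where 'a='a, of "Suc m"] in auto)
  finally have cF: "card Y * (q - t) \<le> card {x\<in>Pts (Suc m). F x \<noteq> 0}" using cS by linarith
  have "(q - r) * q ^ Suc m = ((q - r) * q) * q ^ m" by simp
  also have "\<dots> \<le> ((q - (r - t)) * (q - t)) * q ^ m"
    using arith_key[OF tr Suc.prems(2)[folded q_def]] by simp
  also have "\<dots> = ((q - (r - t)) * q ^ m) * (q - t)" by simp
  also have "\<dots> \<le> (q * card Y) * (q - t)" using IH by simp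
  also have "\<dots> = q * (card Y * (q - t))" by simp
  also have "\<dots> \<le> q * card {x\<in>Pts (Suc m). F x \<noteq> 0}" using cF by simp
  finally show ?case unfolding q_def .
qed




lemma lexpt_Pts: "lexpt alpha q m j \<in> Pts m"
  by (simp add: lexpt_def Pts_def)

lemma lexpt_Suc:
  assumes "j \<ge> 1"
  shows "lexpt alpha q (Suc m) j = (lexpt alpha q m ((j-1) div q + 1))(Suc m := alpha ((j-1) mod q + 1))"
proof (rule ext)
  fix k
  show "lexpt alpha q (Suc m) j k = ((lexpt alpha q m ((j-1) div q + 1))(Suc m := alpha ((j-1) mod q + 1))) k"
  proof (cases "k \<in> {1..m}")
    case True
    then have "Suc m - k = Suc (m - k)" by auto
    then have "(j - 1) div q ^ (Suc m - k) = (j - 1) div q div q ^ (m - k)"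
      by (simp add: div_mult2_eq)
    then show ?thesis using True by (simp add: lexpt_def)
  next
    case False
    then show ?thesis by (cases "k = Suc m") (auto simp: lexpt_def)
  qed
qed

lemma lexpt_surj:
  fixes alpha :: "nat \<Rightarrow> 'a::zero"
  assumes bij: "bij_betw alpha {1..q} UNIV" and q: "q > 0"
  shows "x \<in> Pts m \<Longrightarrow> \<exists>j\<in>{1..q^m}. lexpt alpha q m j = x"
proof (induction m arbitrary: x)
  case 0
  then have "lexpt alpha q 0 1 = x" by (auto simp: lexpt_def Pts_def)
  then show ?case by auto
next
  case (Suc m)
  have "x(Suc m := 0) \<in> Pts m" using Suc.prems by (auto simp: Pts_def)
  then obtain j' where j': "j' \<in> {1..q^m}" "lexpt alpha q m j' = x(Suc m := 0)" using Suc.IH by blast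
  obtain s where s: "s \<in> {1..q}" "alpha s = x (Suc m)" using bij unfolding bij_betw_def by (metis UNIV_I imageE)
  define d where "d = s - 1"
  have d: "d < q" "alpha (d + 1) = x (Suc m)" using s unfolding d_def by auto
  define j where "j = (j' - 1) * q + d + 1"
  have jdiv: "(j - 1) div q = j' - 1" and jmod: "(j - 1) mod q = d" using d(1) unfolding j_def by auto
  have "(j' - 1) * q + d + 1 \<le> (j' - 1) * q + q" using d(1) by simp
  also have "\<dots> = j' * q" using j'(1) by (cases j') (auto simp: algebra_simps)
  also have "\<dots> \<le> q ^ m * q" using j'(1) by simp
  finally have jle: "j \<le> q ^ Suc m" unfolding j_def by (simp add: mult.commute)
  have "lexpt alpha q (Suc m) j = (lexpt alpha q m j')(Suc m := alpha (d + 1))"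
    using lexpt_Suc[of j alpha q m] jdiv jmod j'(1) unfolding j_def by simp
  also have "\<dots> = x" using j'(2) d(2) by auto
  finally show ?case using jle unfolding j_def by auto
qed

lemma supp_bound:
  fixes alpha :: "nat \<Rightarrow> 'a::{finite,field}"
  assumes bij: "bij_betw alpha {1..CARD('a)} UNIV" and m: "m \<ge> 1" and r: "r < CARD('a)"
    and c: "c = (\<lambda>j. if j \<in> {1..CARD('a) ^ m} then peval m r cf (lexpt alpha CARD('a) m j) else 0)"
    and ne: "supp1 (CARD('a) ^ m) c \<noteq> {}"
  shows "(CARD('a) - r) * CARD('a) ^ (m - 1) \<le> w1 (CARD('a) ^ m) c"
proof -
  define q where "q = CARD('a)"
  define F where "F = peval m r cf"
  define P where "P = lexpt alpha q m"
  have q0: "q > 0" unfolding q_def by simp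
  have S: "supp1 (q ^ m) c = {j\<in>{1..q^m}. F (P j) \<noteq> 0}"
    unfolding supp1_def c F_def P_def q_def by auto
  have img: "P ` supp1 (q ^ m) c = {x\<in>Pts m. F x \<noteq> 0}"
  proof
    show "P ` supp1 (q ^ m) c \<subseteq> {x\<in>Pts m. F x \<noteq> 0}" using S lexpt_Pts unfolding P_def by auto
    show "{x\<in>Pts m. F x \<noteq> 0} \<subseteq> P ` supp1 (q ^ m) c"
    proof
      fix x assume x: "x \<in> {x\<in>Pts m. F x \<noteq> 0}"
      then obtain j where "j \<in> {1..q^m}" "P j = x"
        using lexpt_surj[OF bij[folded q_def] q0, of x m] unfolding P_def by auto
      then show "x \<in> P ` supp1 (q ^ m) c" using S x by auto
    qed
  qed
  have ex: "\<exists>x\<in>Pts m. F x \<noteq> 0" using ne img unfolding q_def by blast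
  have "(q - r) * q ^ m \<le> q * card {x\<in>Pts m. F x \<noteq> 0}"
    unfolding q_def F_def by (rule count_bound[OF D_peval r]) (use ex F_def in simp)
  also have "card {x\<in>Pts m. F x \<noteq> 0} \<le> card (supp1 (q ^ m) c)"
    unfolding img[symmetric] by (rule card_image_le) (simp add: supp1_def)
  finally have "(q - r) * q ^ m \<le> q * card (supp1 (q ^ m) c)" by simp
  moreover have "q ^ m = q * q ^ (m - 1)" using m by (cases m) auto
  ultimately have "q * ((q - r) * q ^ (m - 1)) \<le> q * card (supp1 (q ^ m) c)" by (simp add: algebra_simps)
  then show ?thesis using q0 unfolding w1_def q_def by simp
qed




lemma cyc_a1: "1 \<le> a \<Longrightarrow> a < L \<Longrightarrow> cyc L (a + 1) = a + 1"
  by (simp add: cyc_def)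

lemma cyc_Li: "1 \<le> i \<Longrightarrow> i \<le> L \<Longrightarrow> cyc L (L + i) = i"
proof -
  assume "1 \<le> i" "i \<le> L"
  then have "L + i + L - 1 = (i - 1) + L * 2" by simp
  then have "(L + i + L - 1) mod L = (i - 1) mod L" by (simp only: mod_mult_self2)
  also have "\<dots> = i - 1" using \<open>1 \<le> i\<close> \<open>i \<le> L\<close> by simp
  finally show "cyc L (L + i) = i" using \<open>1 \<le> i\<close> unfolding cyc_def by simp
qed

lemma holes:
  assumes sL: "s < L" and J: "J = {s+1..L}"
  shows "{H. is_hole L J H} \<subseteq> {{1..s}}"
proof
  fix H assume "H \<in> {H. is_hole L J H}"
  then obtain a h where a: "a \<in> {1..L}" "h \<ge> 1" "a \<in> J" "cyc L (a + h + 1) \<in> J"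
    and H: "H = (\<lambda>i. cyc L (a + i)) ` {1..h}" "H \<subseteq> {1..L} - J"
    unfolding is_hole_def by blast
  have Hs: "H \<subseteq> {1..s}" using H(2) J sL by auto
  have aL: "a = L"
  proof (rule ccontr)
    assume "a \<noteq> L"
    then have "a < L" using a(1) by auto
    then have "cyc L (a + 1) = a + 1" using a(1) cyc_a1 by auto
    moreover have "cyc L (a + 1) \<in> H" unfolding H(1) using a(2) by (intro image_eqI[where x=1]) auto
    ultimately show False using Hs a(3) J by auto
  qed
  have hs: "h \<le> s"
  proof (rule ccontr)
    assume "\<not> h \<le> s"
    then have "cyc L (L + (s + 1)) \<in> H" unfolding H(1) aL by (intro image_eqI[where x="s+1"]) auto
    moreover have "cyc L (L + (s + 1)) = s + 1" using sL by (intro cyc_Li) auto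
    ultimately show False using Hs by auto
  qed
  have "H = (\<lambda>i. i) ` {1..h}"
    unfolding H(1) aL using hs sL by (intro image_cong) (auto intro: cyc_Li)
  then have H1: "H = {1..h}" by simp
  have "cyc L (L + h + 1) = h + 1" using cyc_Li[of "h+1" L] hs sL by (simp add: add.assoc)
  then have "h + 1 \<in> J" using a(4) aL by simp
  then have "h = s" using J hs by auto
  then show "H \<in> {{1..s}}" using H1 by simp
qed

lemma successive_tail:
  assumes "s < L"
  shows "successive L {s+1..L}"
proof -
  have "card {H. is_hole L {s+1..L} H} \<le> card {{1..s::nat}}"
    by (rule card_mono) (use holes[OF assms refl] in auto)
  then show ?thesis unfolding successive_def by auto
qed

lemma finite_mexps: "finite (mexps m r)"
proof -
  let ?f = "\<lambda>xs k. if k \<in> {1..m} then xs ! (k - 1) else (0::nat)"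
  have "mexps m r \<subseteq> ?f ` {xs. set xs \<subseteq> {0..r} \<and> length xs = m}"
  proof
    fix e assume e: "e \<in> mexps m r"
    have le: "e k \<le> r" if "k \<in> {1..m}" for k
    proof -
      have "e k \<le> (\<Sum>k\<in>{1..m}. e k)" using that by (intro member_le_sum) auto
      then show ?thesis using e by (auto simp: mexps_def)
    qed
    have "e = ?f (map e [1..<m+1])"
    proof
      fix k show "e k = ?f (map e [1..<m+1]) k" using e by (auto simp del: upt_Suc simp: mexps_def nth_map nth_upt)
    qed
    moreover have "set (map e [1..<m+1]) \<subseteq> {0..r}" using le by auto
    ultimately show "e \<in> ?f ` {xs. set xs \<subseteq> {0..r} \<and> length xs = m}" by force
  qed
  moreover have "finite {xs. set xs \<subseteq> {0..r} \<and> length xs = m}"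
    by (rule finite_lists_length_eq) simp
  ultimately show ?thesis by (rule finite_subset[OF _ finite_imageI])
qed

definition cfp :: "'a::comm_ring_1 poly \<Rightarrow> (nat \<Rightarrow> nat) \<Rightarrow> 'a" where
  "cfp p e = (if (\<forall>k. k \<noteq> 1 \<longrightarrow> e k = 0) then coeff p (e 1) else 0)"

lemma peval_cfp:
  assumes m: "m \<ge> 1" and dp: "degree p \<le> r"
  shows "peval m r (cfp p) x = poly p (x 1)"
proof -
  define E where "E i = (\<lambda>k::nat. if k = 1 then i else (0::nat))" for i
  have Em: "E ` {..r} \<subseteq> mexps m r"
  proof
    fix e assume "e \<in> E ` {..r}"
    then obtain i where i: "i \<le> r" "e = E i" by auto
    have "(\<Sum>k\<in>{1..m}. E i k) = (\<Sum>k\<in>{1..m}. if k = 1 then i else 0)" by (simp add: E_def)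
    also have "\<dots> = i" using m by (simp add: sum.delta)
    finally show "e \<in> mexps m r" using i by (auto simp: mexps_def E_def)
  qed
  have "peval m r (cfp p) x = (\<Sum>e\<in>E ` {..r}. cfp p e * (\<Prod>k\<in>{1..m}. x k ^ e k))"
    unfolding peval_def
  proof (rule sum.mono_neutral_right[OF finite_mexps Em])
    show "\<forall>e\<in>mexps m r - E ` {..r}. cfp p e * (\<Prod>k\<in>{1..m}. x k ^ e k) = 0"
    proof
      fix e assume e: "e \<in> mexps m r - E ` {..r}"
      show "cfp p e * (\<Prod>k\<in>{1..m}. x k ^ e k) = 0"
      proof (cases "\<forall>k. k \<noteq> 1 \<longrightarrow> e k = 0")
        case True
        then have "e = E (e 1)" unfolding E_def by auto
        moreover have "e 1 \<le> r"
        proof -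
          have "e 1 \<le> (\<Sum>k\<in>{1..m}. e k)" using m by (intro member_le_sum) auto
          then show ?thesis using e by (auto simp: mexps_def)
        qed
        ultimately show ?thesis using e by auto
      next
        case False
        then have "cfp p e = 0" unfolding cfp_def by (rule if_not_P)
        then show ?thesis by simp
      qed
    qed
  qed
  also have "\<dots> = (\<Sum>i\<le>r. cfp p (E i) * (\<Prod>k\<in>{1..m}. x k ^ E i k))"
    by (rule sum.reindex[unfolded comp_def]) (auto simp: inj_on_def E_def fun_eq_iff)
  also have "\<dots> = (\<Sum>i\<le>r. coeff p i * x 1 ^ i)"
  proof (rule sum.cong[OF refl])
    fix i
    have "(\<Prod>k\<in>{1..m}. x k ^ E i k) = (\<Prod>k\<in>{1..m}. if k = 1 then x k ^ i else 1)"
      by (rule prod.cong) (auto simp: E_def)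
    also have "\<dots> = x 1 ^ i" using m by (simp add: prod.delta)
    finally show "cfp p (E i) * (\<Prod>k\<in>{1..m}. x k ^ E i k) = coeff p i * x 1 ^ i"
      by (simp add: cfp_def E_def)
  qed
  also have "\<dots> = (\<Sum>i\<le>degree p. coeff p i * x 1 ^ i)"
    by (rule sum.mono_neutral_right) (use dp in \<open>auto simp: coeff_eq_0\<close>)
  also have "\<dots> = poly p (x 1)" by (simp add: poly_altdef)
  finally show ?thesis .
qed




theorem mainTheorem8:
  fixes alpha :: "nat \<Rightarrow> 'a::{finite,field}" and r m :: nat
  assumes "bij_betw alpha {1..CARD('a)} UNIV" and "alpha 1 = 0"
    and "m \<ge> 1" and "r < CARD('a) - 1"
  shows "\<exists>c \<in> RM alpha r m.
     w1 (CARD('a) ^ m) c = d1 (CARD('a) ^ m) (RM alpha r m) \<and>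
     successive (CARD('a) ^ m) (supp1 (CARD('a) ^ m) c) \<and>
     (supp1 (CARD('a) ^ m) c \<noteq> {1..CARD('a) ^ m} \<longrightarrow> 1 \<notin> supp1 (CARD('a) ^ m) c)"
proof -
  note bij = assms(1) and m = assms(3)
  define q where "q = CARD('a)"
  have rq: "r < q" using assms(4) q_def by linarith
  have q0: "q > 0" unfolding q_def by simp
  define Q where "Q = q ^ (m - 1)"
  have Q0: "Q > 0" using q0 Q_def by simp
  have LQ: "q ^ m = q * Q" unfolding Q_def using m by (cases m) auto
  define p :: "'a poly" where "p = (\<Prod>i\<in>{1..r}. [:- alpha i, 1:])"
  have "degree p \<le> (\<Sum>i\<in>{1..r}. degree [:- alpha i, 1:])"
    unfolding p_def using degree_prod_sum_le[of "{1..r}" "\<lambda>i. [:- alpha i, 1:]"] by (simp add: comp_def)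
  then have dp: "degree p \<le> r" by simp
  have pp: "poly p a = (\<Prod>i\<in>{1..r}. a - alpha i)" for a by (simp add: p_def poly_prod)
  define c where "c = (\<lambda>j. if j \<in> {1..CARD('a) ^ m} then peval m r (cfp p) (lexpt alpha CARD('a) m j) else 0)"
  have cRM: "c \<in> RM alpha r m" unfolding RM_def c_def by blast
  have inj: "inj_on alpha {1..q}" using bij unfolding bij_betw_def q_def by simp
  have zero_iff: "poly p (alpha s) = 0 \<longleftrightarrow> s \<le> r" if s: "s \<in> {1..q}" for s
  proof -
    have "poly p (alpha s) = 0 \<longleftrightarrow> (\<exists>i\<in>{1..r}. alpha s - alpha i = 0)" by (simp add: pp)
    also have "\<dots> \<longleftrightarrow> (\<exists>i\<in>{1..r}. s = i)"
    proof
      assume "\<exists>i\<in>{1..r}. alpha s - alpha i = 0"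
      then obtain i where i: "i \<in> {1..r}" "alpha s = alpha i" by auto
      then have "i \<in> {1..q}" using rq by auto
      then show "\<exists>i\<in>{1..r}. s = i" using i inj s by (metis inj_onD)
    qed auto
    also have "\<dots> \<longleftrightarrow> s \<le> r" using s by auto
    finally show ?thesis .
  qed
  have cval: "c j = poly p (alpha ((j - 1) div Q + 1))" if j: "j \<in> {1..q^m}" for j
  proof -
    have "c j = poly p (lexpt alpha q m j 1)" using j peval_cfp[OF m dp] unfolding c_def q_def by simp
    have "j \<le> q * Q" "1 \<le> j" using j LQ by auto
    then have "j - 1 < q * Q" by linarith
    then have "(j - 1) div Q < q" using Q0 by (simp add: div_less_iff_less_mult mult.commute)
    with \<open>c j = _\<close> show ?thesis using m by (simp add: lexpt_def Q_def)
  qed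
  have supp: "supp1 (q ^ m) c = {r * Q + 1..q ^ m}"
  proof -
    have "c j \<noteq> 0 \<longleftrightarrow> r * Q + 1 \<le> j" if j: "j \<in> {1..q^m}" for j
    proof -
      have "j \<le> q * Q" "1 \<le> j" using j LQ by auto
      then have "j - 1 < q * Q" by linarith
      then have dq: "(j - 1) div Q + 1 \<in> {1..q}" using Q0 by (simp add: div_less_iff_less_mult mult.commute Suc_le_eq)
      have "c j \<noteq> 0 \<longleftrightarrow> \<not> (j - 1) div Q + 1 \<le> r" using cval[OF j] zero_iff[OF dq] by simp
      also have "\<dots> \<longleftrightarrow> r \<le> (j - 1) div Q" by linarith
      also have "\<dots> \<longleftrightarrow> r * Q \<le> j - 1" using Q0 by (rule less_eq_div_iff_mult_less_eq)
      also have "\<dots> \<longleftrightarrow> r * Q + 1 \<le> j" using j by auto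
      finally show ?thesis .
    qed
    note H = this
    show ?thesis
    proof (rule set_eqI)
      fix j
      show "j \<in> supp1 (q ^ m) c \<longleftrightarrow> j \<in> {r * Q + 1..q ^ m}"
      proof (cases "j \<in> {1..q^m}")
        case True then show ?thesis using H[OF True] unfolding supp1_def by auto
      next
        case False then show ?thesis unfolding supp1_def by auto
      qed
    qed
  qed
  have sL: "r * Q < q ^ m" using LQ Q0 rq by simp
  have w: "w1 (q ^ m) c = (q - r) * Q"
    unfolding w1_def supp using LQ by (simp add: diff_mult_distrib)
  have d: "d1 (q ^ m) (RM alpha r m) = (q - r) * Q"
    unfolding d1_def
  proof (rule Min_eqI)
    show "finite {w1 (q ^ m) c |c. c \<in> RM alpha r m \<and> supp1 (q ^ m) c \<noteq> {}}"
    proof (rule finite_subset[of _ "{..q^m}"])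
      show "{w1 (q ^ m) c |c. c \<in> RM alpha r m \<and> supp1 (q ^ m) c \<noteq> {}} \<subseteq> {..q ^ m}"
      proof
        fix w assume "w \<in> {w1 (q ^ m) c |c. c \<in> RM alpha r m \<and> supp1 (q ^ m) c \<noteq> {}}"
        then obtain c' :: "nat \<Rightarrow> 'a" where "w = w1 (q ^ m) c'" by blast
        moreover have "card (supp1 (q ^ m) c') \<le> card {1..q^m}"
          by (rule card_mono) (auto simp: supp1_def)
        ultimately show "w \<in> {..q ^ m}" unfolding w1_def by simp
      qed
    qed simp
    show "(q - r) * Q \<in> {w1 (q ^ m) c |c. c \<in> RM alpha r m \<and> supp1 (q ^ m) c \<noteq> {}}"
    proof -
      have "supp1 (q ^ m) c \<noteq> {}" using supp sL by auto
      then show ?thesis using cRM w by (metis (mono_tags, lifting) mem_Collect_eq)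
    qed
    fix y assume "y \<in> {w1 (q ^ m) c |c. c \<in> RM alpha r m \<and> supp1 (q ^ m) c \<noteq> {}}"
    then obtain c' cf where y: "y = w1 (q ^ m) c'" "supp1 (q ^ m) c' \<noteq> {}"
      and c': "c' = (\<lambda>j. if j \<in> {1..CARD('a) ^ m} then peval m r cf (lexpt alpha CARD('a) m j) else 0)"
      unfolding RM_def by auto
    show "(q - r) * Q \<le> y"
      using supp_bound[OF bij m _ c'] y rq unfolding q_def Q_def by simp
  qed
  show ?thesis
    unfolding q_def[symmetric]
  proof (intro bexI[OF _ cRM] conjI impI)
    show "w1 (q ^ m) c = d1 (q ^ m) (RM alpha r m)" using w d by simp
    show "successive (q ^ m) (supp1 (q ^ m) c)" unfolding supp using successive_tail[OF sL] by simp
    assume "supp1 (q ^ m) c \<noteq> {1..q ^ m}"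
    then have "r \<noteq> 0" unfolding supp by auto
    then show "1 \<notin> supp1 (q ^ m) c" unfolding supp using Q0 by auto
  qed
qed


end
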